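(* Let $Q=S^1\times S^1$ with angular coordinates $(\psi,\varphi)$ on a neighborhood $U$ of $(0,0)$, let $A,B,C,D_1,D_2>0$ be constants with $AC>B^2$, and consider $$\mathfrak H(\psi,\varphi,p_\psi,p_\varphi)=\frac{1}{2m(\psi,\varphi)}\big(Cp_\psi^2-2B\cos(\psi-\varphi)p_\psi p_\varphi+Ap_\varphi^2\big),\quad m=AC-B^2\cos^2(\psi-\varphi),$$ $h(\psi,\varphi)=D_1\cos\psi+D_2\cos\varphi$, and $W=\mathrm{span}\{\mathrm d\varphi\}$. For a constant $\gamma\notin\{-1,A/B\}$ set $x=\psi$, $y=\varphi+\gamma\psi$ and $b:=B\cos((1+\gamma)x-y)$. Then, shrinking $U$ if necessary, $\hat W:=(\mathbb F\mathfrak H)^{-1}(\mathrm{span}\{\partial/\partial x\})$ is a complement of $W$; the projection $\hat{\mathfrak p}$ onto $\hat W$ along $W$ satisfies $\hat{\mathfrak p}(\mathrm dx)=\frac{1}{A-\gamma b}\sigma$, $\hat{\mathfrak p}(\mathrm dy)=\frac{\gamma}{A-\gamma b}\sigma$ with $\sigma:=(\mathbb F\mathfrak H)^{-1}(\partial/\partial x)$; and for every quadratic form $\mathfrak K$ on $\hat W$, writing $\mathfrak K(a\sigma)=\tfrac12K a^2$ with $K>0$, the function $u:=\big(\frac{\partial h}{\partial x}\hat P^1+\frac{\partial h}{\partial y}\hat P^2\big)K$ (where $\hat P^1=\frac{1}{A-\gamma b}$, $\hat P^2=\frac{\gamma}{A-\gamma b}$) equals $u(x,y)=-\frac{D_1\sin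 x}{A-\gamma b}K(x,y)$. Consequently $\frac{\partial u}{\partial y}(0,0)=0$ and $\frac{\partial u}{\partial x}(0,0)=\frac{-D_1K(0,0)}{A-\gamma B}$, which is positive if and only if $\gamma>A/B$; hence, when $\mathfrak K$ solves the kinetic equation, the solution $\hat h(x,y)=\int_0^xu(t,y)\,\mathrm dt+\frac{\varpi}{2}y^2$ of the potential equation has a critical point with positive-definite Hessian at $(0,0)$ if and only if $\gamma>A/B$ and $\varpi>0$.
   Context: A quadratic form on a subbundle $V\subseteq T^*Q$ is $\mathfrak F(\alpha)=\tfrac12\langle\alpha,\rho^\sharp(\alpha)\rangle$ with $\rho$ a smooth positive-definite fibered inner product on $V^*$. $\mathbb F\mathfrak H:T^*Q\to TQ$ is the fiber derivative, $\langle\beta,\mathbb F\mathfrak H(\alpha)\rangle=\frac{d}{dt}\mathfrak H(\alpha+t\beta)|_{t=0}$, a bundle isomorphism. A complement of $W$ is a subbundle $\hat W$ with $T^*Q=\hat W\oplus W$. The kinetic equation for $\mathfrak K$ is $\{\mathfrak K\circ\hat{\mathfrak p},\mathfrak H\}(\sigma)=0$ for all $\sigma\in\hat W$ ($\{\cdot,\cdot\}$ the canonical Poisson bracket), and the potential equation for $\hat h:Q\to\mathbb R$ is $\big(\mathrm d\hat h\circ\mathbb F\mathfrak H-\mathrm dh\circ\mathbb F(\mathfrak K\circ\hat{\mathfrak p})\big)(\sigma)=0$ for all $\sigma\in\hat W$, which in the coordinates $(x,y)$ reads $\partial\hat h/\partial x=u$. Functions are identified with their local representatives in the coordinates $(x,y)$.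 *)

theory Defs
  imports "HOL-Analysis.Analysis"
begin

(* Everything is expressed in the local chart (psi,phi) of Q = S^1 x S^1 around (0,0).
   Points q = (psi,phi) :: real*real.  Covectors at q are given by their components
   (p_psi,p_phi) in the basis (d psi, d phi); tangent vectors by their components in
   (d/d psi, d/d phi). *)
definition pairing :: "real \<times> real \<Rightarrow> real \<times> real \<Rightarrow> real" where
  "pairing \<beta> v = fst \<beta> * fst v + snd \<beta> * snd v"

definition mfun :: "real \<Rightarrow> real \<Rightarrow> real \<Rightarrow> real \<times> real \<Rightarrow> real" where
  "mfun A B C q = A * C - B\<^sup>2 * (cos (fst q - snd q))\<^sup>2"

definition Ham :: "real \<Rightarrow> real \<Rightarrow> real \<Rightarrow> real \<times> real \<Rightarrow> real \<times> real \<Rightarrow> real" where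
  "Ham A B C q \<alpha> = (C * (fst \<alpha>)\<^sup>2 - 2 * B * cos (fst q - snd q) * fst \<alpha> * snd \<alpha>
                      + A * (snd \<alpha>)\<^sup>2) / (2 * mfun A B C q)"

(* fiber derivative at a point: <beta, FH(alpha)> = d/dt H(alpha + t beta) at t=0,
   evaluated on the basis covectors d psi = (1,0), d phi = (0,1) *)
definition fiberD :: "(real \<times> real \<Rightarrow> real) \<Rightarrow> real \<times> real \<Rightarrow> real \<times> real" where
  "fiberD Hq \<alpha> = (deriv (\<lambda>t. Hq (\<alpha> + t *\<^sub>R (1, 0))) 0, deriv (\<lambda>t. Hq (\<alpha> + t *\<^sub>R (0, 1))) 0)"

definition xy_of :: "real \<Rightarrow> real \<times> real \<Rightarrow> real \<times> real" where
  "xy_of \<gamma> q = (fst q, snd q + \<gamma> * fst q)"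

definition psiphi_of :: "real \<Rightarrow> real \<times> real \<Rightarrow> real \<times> real" where
  "psiphi_of \<gamma> z = (fst z, snd z - \<gamma> * fst z)"

(* dx = d psi, dy = d phi + gamma d psi, and d/dx = d/dpsi - gamma d/dphi,
   written in the (psi,phi) bases *)
definition dx_cov :: "real \<times> real" where "dx_cov = (1, 0)"
definition dy_cov :: "real \<Rightarrow> real \<times> real" where "dy_cov \<gamma> = (\<gamma>, 1)"
definition dx_vec :: "real \<Rightarrow> real \<times> real" where "dx_vec \<gamma> = (1, - \<gamma>)"

definition Wsp :: "(real \<times> real) set" where
  "Wsp = range (\<lambda>t. t *\<^sub>R (0, 1))"

definition What :: "real \<Rightarrow> real \<Rightarrow> real \<Rightarrow> real \<Rightarrow> real \<times> real \<Rightarrow> (real \<times> real) set" where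
  "What A B C \<gamma> q = {\<alpha>. \<exists>t. fiberD (Ham A B C q) \<alpha> = t *\<^sub>R dx_vec \<gamma>}"

definition sigma :: "real \<Rightarrow> real \<Rightarrow> real \<Rightarrow> real \<Rightarrow> real \<times> real \<Rightarrow> real \<times> real" where
  "sigma A B C \<gamma> q = (THE \<alpha>. fiberD (Ham A B C q) \<alpha> = dx_vec \<gamma>)"

definition is_complement :: "(real \<times> real) set \<Rightarrow> (real \<times> real) set \<Rightarrow> bool" where
  "is_complement Wh W \<longleftrightarrow> subspace Wh \<and> subspace W \<and> Wh \<inter> W = {0}
      \<and> (\<forall>\<alpha>. \<exists>w1\<in>Wh. \<exists>w2\<in>W. \<alpha> = w1 + w2)"

definition proj :: "(real \<times> real) set \<Rightarrow> (real \<times> real) set \<Rightarrow> real \<times> real \<Rightarrow> real \<times> real" where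
  "proj Wh W \<alpha> = (THE w. w \<in> Wh \<and> \<alpha> - w \<in> W)"

definition bfun :: "real \<Rightarrow> real \<Rightarrow> real \<times> real \<Rightarrow> real" where
  "bfun B \<gamma> z = B * cos ((1 + \<gamma>) * fst z - snd z)"

definition px :: "(real \<times> real \<Rightarrow> real) \<Rightarrow> real \<times> real \<Rightarrow> real" where
  "px f z = deriv (\<lambda>t. f (t, snd z)) (fst z)"
definition py :: "(real \<times> real \<Rightarrow> real) \<Rightarrow> real \<times> real \<Rightarrow> real" where
  "py f z = deriv (\<lambda>t. f (fst z, t)) (snd z)"

(* C^infinity functions of two real variables on a set S *)
coinductive smooth2 :: "(real \<times> real) set \<Rightarrow> (real \<times> real \<Rightarrow> real) \<Rightarrow> bool" for S where
  "continuous_on S f \<Longrightarrow>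
   (\<forall>z\<in>S. (f has_derivative (\<lambda>v. fst v * g1 z + snd v * g2 z)) (at z)) \<Longrightarrow>
   smooth2 S g1 \<Longrightarrow> smooth2 S g2 \<Longrightarrow> smooth2 S f"

definition hfun :: "real \<Rightarrow> real \<Rightarrow> real \<times> real \<Rightarrow> real" where
  "hfun D1 D2 q = D1 * cos (fst q) + D2 * cos (snd q)"

definition Phat1 :: "real \<Rightarrow> real \<Rightarrow> real \<Rightarrow> real \<times> real \<Rightarrow> real" where
  "Phat1 A B \<gamma> z = 1 / (A - \<gamma> * bfun B \<gamma> z)"
definition Phat2 :: "real \<Rightarrow> real \<Rightarrow> real \<Rightarrow> real \<times> real \<Rightarrow> real" where
  "Phat2 A B \<gamma> z = \<gamma> / (A - \<gamma> * bfun B \<gamma> z)"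

definition ufun :: "real \<Rightarrow> real \<Rightarrow> real \<Rightarrow> real \<Rightarrow> real \<Rightarrow> (real \<times> real \<Rightarrow> real)
                      \<Rightarrow> real \<times> real \<Rightarrow> real" where
  "ufun A B D1 D2 \<gamma> K z =
     (px (\<lambda>w. hfun D1 D2 (psiphi_of \<gamma> w)) z * Phat1 A B \<gamma> z
      + py (\<lambda>w. hfun D1 D2 (psiphi_of \<gamma> w)) z * Phat2 A B \<gamma> z) * K z"

(* the function K o hat p on T*Q, where hat p(alpha) = a sigma and K(a sigma) = K a^2/2 *)
definition KP :: "real \<Rightarrow> real \<Rightarrow> real \<Rightarrow> real \<Rightarrow> (real \<times> real \<Rightarrow> real)
                   \<Rightarrow> (real \<times> real) \<times> (real \<times> real) \<Rightarrow> real" where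
  "KP A B C \<gamma> K z = (let q = fst z; \<alpha> = snd z;
      a = (THE a. proj (What A B C \<gamma> q) Wsp \<alpha> = a *\<^sub>R sigma A B C \<gamma> q)
    in K (xy_of \<gamma> q) * a\<^sup>2 / 2)"

definition dd :: "((real \<times> real) \<times> (real \<times> real) \<Rightarrow> real) \<Rightarrow> (real \<times> real) \<times> (real \<times> real)
                   \<Rightarrow> (real \<times> real) \<times> (real \<times> real) \<Rightarrow> real" where
  "dd F z e = deriv (\<lambda>t. F (z + t *\<^sub>R e)) 0"

definition pbracket :: "((real \<times> real) \<times> (real \<times> real) \<Rightarrow> real) \<Rightarrow> ((real \<times> real) \<times> (real \<times> real) \<Rightarrow> real)
                        \<Rightarrow> (real \<times> real) \<times> (real \<times> real) \<Rightarrow> real" where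
  "pbracket F G z =
      dd F z ((1,0),(0,0)) * dd G z ((0,0),(1,0)) + dd F z ((0,1),(0,0)) * dd G z ((0,0),(0,1))
    - dd F z ((0,0),(1,0)) * dd G z ((1,0),(0,0)) - dd F z ((0,0),(0,1)) * dd G z ((0,1),(0,0))"

definition kinetic_eq :: "real \<Rightarrow> real \<Rightarrow> real \<Rightarrow> real \<Rightarrow> (real \<times> real) set \<Rightarrow> (real \<times> real \<Rightarrow> real) \<Rightarrow> bool" where
  "kinetic_eq A B C \<gamma> U K \<longleftrightarrow>
     (\<forall>q\<in>U. \<forall>s\<in>What A B C \<gamma> q.
        pbracket (KP A B C \<gamma> K) (\<lambda>z. Ham A B C (fst z) (snd z)) (q, s) = 0)"

definition oint :: "real \<Rightarrow> real \<Rightarrow> (real \<Rightarrow> real) \<Rightarrow> real" where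
  "oint a b f = (if a \<le> b then integral {a..b} f else - integral {b..a} f)"

definition hhat :: "(real \<times> real \<Rightarrow> real) \<Rightarrow> real \<Rightarrow> real \<times> real \<Rightarrow> real" where
  "hhat u varpi z = oint 0 (fst z) (\<lambda>t. u (t, snd z)) + varpi / 2 * (snd z)\<^sup>2"

definition crit_posdef :: "(real \<times> real \<Rightarrow> real) \<Rightarrow> real \<times> real \<Rightarrow> bool" where
  "crit_posdef f z \<longleftrightarrow> px f z = 0 \<and> py f z = 0 \<and>
     (\<forall>a b. (a, b) \<noteq> (0, 0) \<longrightarrow>
        a\<^sup>2 * px (px f) z + a * b * (px (py f) z + py (px f) z) + b\<^sup>2 * py (py f) z > 0)"

end

theory Submission
  imports Defs
begin

lemma oint_deriv:
  fixes h :: "real \<Rightarrow> real"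
  assumes hc: "continuous_on {a<..<b} h" and "a < 0" "0 < b" and x: "x \<in> {a<..<b}"
  shows "((\<lambda>t. oint 0 t h) has_real_derivative h x) (at x)"
proof -
  define c where "c = (a + min 0 x)/2"
  define d where "d = (b + max 0 x)/2"
  have cd: "a < c" "c < min 0 x" "max 0 x < d" "d < b" using assms by (auto simp: c_def d_def)
  have hcd: "continuous_on {c..d} h" using cd by (intro continuous_on_subset[OF hc]) auto
  have int: "h integrable_on {c..d}" by (rule integrable_continuous_interval[OF hcd])
  have eq: "integral {c..t} h - integral {c..0} h = oint 0 t h" if t: "t \<in> {c<..<d}" for t
  proof (cases "0 \<le> t")
    case True
    have "integral {c..0} h + integral {0..t} h = integral {c..t} h"
    proof (rule Henstock_Kurzweil_Integration.integral_combine)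
      show "h integrable_on {c..t}" using cd t by (intro integrable_subinterval_real[OF int]) auto
    qed (use cd t True in auto)
    then show ?thesis using True by (simp add: oint_def)
  next
    case False
    have "integral {c..t} h + integral {t..0} h = integral {c..0} h"
    proof (rule Henstock_Kurzweil_Integration.integral_combine)
      show "h integrable_on {c..0}" using cd t by (intro integrable_subinterval_real[OF int]) auto
    qed (use cd t False in auto)
    then show ?thesis using False by (simp add: oint_def algebra_simps)
  qed
  have "((\<lambda>t. integral {c..t} h) has_real_derivative h x) (at x within {c..d})"
    using cd by (intro integral_has_real_derivative hcd) auto
  then have "((\<lambda>t. integral {c..t} h) has_real_derivative h x) (at x within {c<..<d})"
    by (rule has_field_derivative_subset) auto
  then have "((\<lambda>t. integral {c..t} h) has_real_derivative h x) (at x)"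
    using cd by (subst (asm) at_within_open) auto
  then have "((\<lambda>t. integral {c..t} h - integral {c..0} h) has_real_derivative h x) (at x)"
    by (auto intro!: derivative_eq_intros)
  then show ?thesis
    by (rule has_field_derivative_transform_within_open[where S="{c<..<d}"]) (use cd eq in auto)
qed

lemma leib_aux:
  fixes u uy :: "real \<times> real \<Rightarrow> real"
  assumes r: "r > 0"
    and cu: "continuous_on ({-r<..<r} \<times> {-r<..<r}) u"
    and cuy: "continuous_on ({-r<..<r} \<times> {-r<..<r}) uy"
    and dy: "\<And>z. z \<in> {-r<..<r} \<times> {-r<..<r} \<Longrightarrow> ((\<lambda>s. u (fst z, s)) has_real_derivative uy z) (at (snd z))"
    and ab: "-r < a" "a \<le> b" "b < r"
  shows "((\<lambda>s. integral {a..b} (\<lambda>x. u (x, s))) has_real_derivative integral {a..b} (\<lambda>x. uy (x, 0))) (at 0)"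
proof -
  let ?U = "{-r<..<r}"
  have sw: "continuous_on (?U \<times> cbox a b) (\<lambda>(s, x). uy (x, s))"
  proof -
    have "continuous_on (?U \<times> cbox a b) (uy \<circ> (\<lambda>(s, x). (x, s)))"
    proof (rule continuous_on_compose)
      show "continuous_on (?U \<times> cbox a b) (\<lambda>(s, x). (x, s))"
        by (auto intro!: continuous_intros simp: split_beta)
      show "continuous_on ((\<lambda>(s, x). (x, s)) ` (?U \<times> cbox a b)) uy"
        by (rule continuous_on_subset[OF cuy]) (use ab in auto)
    qed
    then show ?thesis by (simp add: o_def split_beta)
  qed
  have "((\<lambda>s. integral (cbox a b) (\<lambda>x. u (x, s))) has_field_derivative integral (cbox a b) (\<lambda>x. uy (x, 0))) (at 0 within ?U)"
  proof (rule leibniz_rule_field_derivative[where fx="\<lambda>s x. uy (x, s)"])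
    fix s x assume s: "s \<in> ?U" and x: "x \<in> cbox a b"
    have "((\<lambda>s. u (fst (x, s), s)) has_real_derivative uy (x, s)) (at (snd (x, s)))"
      using dy[of "(x, s)"] s x ab by auto
    then show "((\<lambda>s. u (x, s)) has_field_derivative uy (x, s)) (at s within ?U)"
      by (auto intro: has_field_derivative_at_within)
  next
    fix s assume s: "s \<in> ?U"
    have "continuous_on {a..b} (u \<circ> (\<lambda>x. (x, s)))"
    proof (rule continuous_on_compose)
      show "continuous_on {a..b} (\<lambda>x. (x, s))" by (intro continuous_intros)
      show "continuous_on ((\<lambda>x. (x, s)) ` {a..b}) u"
        by (rule continuous_on_subset[OF cu]) (use ab s in auto)
    qed
    then show "(\<lambda>x. u (x, s)) integrable_on cbox a b"
      by (auto simp: o_def intro: integrable_continuous_interval)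
  next
    show "continuous_on (?U \<times> cbox a b) (\<lambda>(s, x). uy (x, s))" by (rule sw)
  next
    show "0 \<in> ?U" using r by simp
  next
    show "convex ?U" by (rule convex_real_interval(8))
  qed
  moreover have "at 0 within ?U = at 0" using r by (intro at_within_open) auto
  ultimately show ?thesis by (simp only: cbox_interval)
qed

lemma oint_leib:
  fixes u uy :: "real \<times> real \<Rightarrow> real"
  assumes r: "r > 0"
    and cu: "continuous_on ({-r<..<r} \<times> {-r<..<r}) u"
    and cuy: "continuous_on ({-r<..<r} \<times> {-r<..<r}) uy"
    and dy: "\<And>z. z \<in> {-r<..<r} \<times> {-r<..<r} \<Longrightarrow> ((\<lambda>s. u (fst z, s)) has_real_derivative uy z) (at (snd z))"
    and t: "t \<in> {-r<..<r}"
  shows "((\<lambda>s. oint 0 t (\<lambda>x. u (x, s))) has_real_derivative oint 0 t (\<lambda>x. uy (x, 0))) (at 0)"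
proof (cases "0 \<le> t")
  case True
  have "((\<lambda>s. integral {0..t} (\<lambda>x. u (x, s))) has_real_derivative integral {0..t} (\<lambda>x. uy (x, 0))) (at 0)"
    by (rule leib_aux[OF r cu cuy dy]) (use t True r in auto)
  then show ?thesis using True by (simp add: oint_def)
next
  case False
  have "((\<lambda>s. integral {t..0} (\<lambda>x. u (x, s))) has_real_derivative integral {t..0} (\<lambda>x. uy (x, 0))) (at 0)"
    by (rule leib_aux[OF r cu cuy dy]) (use t False r in auto)
  then have "((\<lambda>s. - integral {t..0} (\<lambda>x. u (x, s))) has_real_derivative - integral {t..0} (\<lambda>x. uy (x, 0))) (at 0)"
    by (rule DERIV_minus)
  then show ?thesis using False by (simp add: oint_def)
qed

lemma cont_slice_x:
  fixes u :: "real \<times> real \<Rightarrow> real"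
  assumes cu: "continuous_on ({-r<..<r} \<times> {-r<..<r}) u" and y: "y \<in> {-r<..<r}"
  shows "continuous_on {-r<..<r} (\<lambda>x. u (x, y))"
proof -
  have "continuous_on {-r<..<r} (u \<circ> (\<lambda>x. (x, y)))"
  proof (rule continuous_on_compose)
    show "continuous_on {-r<..<r} (\<lambda>x. (x, y))" by (intro continuous_intros)
    show "continuous_on ((\<lambda>x. (x, y)) ` {-r<..<r}) u"
      by (rule continuous_on_subset[OF cu]) (use y in auto)
  qed
  then show ?thesis by (simp add: o_def)
qed

lemma hhat_crit:
  fixes u uy :: "real \<times> real \<Rightarrow> real"
  assumes r: "r > 0"
    and cu: "continuous_on ({-r<..<r} \<times> {-r<..<r}) u"
    and cuy: "continuous_on ({-r<..<r} \<times> {-r<..<r}) uy"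
    and dy: "\<And>z. z \<in> {-r<..<r} \<times> {-r<..<r} \<Longrightarrow> ((\<lambda>s. u (fst z, s)) has_real_derivative uy z) (at (snd z))"
    and u0: "\<And>y. u (0, y) = 0" and uy0: "uy (0, 0) = 0"
  shows "crit_posdef (hhat u varpi) (0, 0) \<longleftrightarrow> px u (0, 0) > 0 \<and> varpi > 0"
proof -
  let ?H = "hhat u varpi"
  have pxH: "px ?H (x, y) = u (x, y)" if "x \<in> {-r<..<r}" "y \<in> {-r<..<r}" for x y
  proof -
    have "((\<lambda>t. oint 0 t (\<lambda>s. u (s, y))) has_real_derivative u (x, y)) (at x)"
      by (rule oint_deriv[OF cont_slice_x[OF cu that(2)]]) (use r that in auto)
    then have "((\<lambda>t. oint 0 t (\<lambda>s. u (s, y)) + varpi / 2 * y\<^sup>2) has_real_derivative u (x, y)) (at x)"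
      by (auto intro!: derivative_eq_intros)
    then show ?thesis by (simp add: px_def hhat_def DERIV_imp_deriv)
  qed
  have oint00: "oint 0 0 f = 0" for f :: "real \<Rightarrow> real" by (simp add: oint_def)
  have pyH0: "py ?H (0, t) = varpi * t" for t
  proof -
    have "((\<lambda>s. varpi / 2 * s\<^sup>2) has_real_derivative varpi * t) (at t)"
      by (auto intro!: derivative_eq_intros)
    then show ?thesis by (simp add: py_def hhat_def oint00 DERIV_imp_deriv)
  qed
  have pyHx: "py ?H (t, 0) = oint 0 t (\<lambda>x. uy (x, 0))" if t: "t \<in> {-r<..<r}" for t
  proof -
    have "((\<lambda>s. oint 0 t (\<lambda>x. u (x, s)) + varpi / 2 * s\<^sup>2) has_real_derivative oint 0 t (\<lambda>x. uy (x, 0)) + 0) (at 0)"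
      by (rule DERIV_add[OF oint_leib[OF r cu cuy dy t]]) (auto intro!: derivative_eq_intros)
    then show ?thesis by (simp add: py_def hhat_def DERIV_imp_deriv)
  qed
  have opn: "open {-r<..<(r::real)}" "(0::real) \<in> {-r<..<r}" using r by auto
  have P1: "px ?H (0, 0) = 0" using pxH[of 0 0] r u0 by simp
  have P2: "py ?H (0, 0) = 0" using pyH0[of 0] by simp
  have Hxx: "px (px ?H) (0, 0) = px u (0, 0)"
    unfolding px_def[of "px ?H"] px_def[of u]
  proof (simp, rule deriv_cong_ev)
    show "\<forall>\<^sub>F x in nhds 0. px ?H (x, 0) = u (x, 0)"
      using eventually_nhds_in_open[OF opn] by eventually_elim (use opn in \<open>simp add: pxH\<close>)
  qed simp
  have Hyy: "py (py ?H) (0, 0) = varpi"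
  proof -
    have "((\<lambda>t. py ?H (0, t)) has_real_derivative varpi) (at 0)"
      unfolding pyH0 by (auto intro!: derivative_eq_intros)
    then show ?thesis by (simp add: py_def[of "py ?H"] DERIV_imp_deriv)
  qed
  have Hxy: "py (px ?H) (0, 0) = 0"
  proof -
    have "((\<lambda>t. px ?H (0, t)) has_real_derivative 0) (at 0)"
    proof (rule has_field_derivative_transform_within_open[OF _ opn])
      show "((\<lambda>t. 0) has_real_derivative 0) (at 0)" by simp
      show "0 = px ?H (0, t)" if "t \<in> {-r<..<r}" for t using pxH[of 0 t] that opn u0 by simp
    qed
    then show ?thesis by (simp add: py_def[of "px ?H"] DERIV_imp_deriv)
  qed
  have Hyx: "px (py ?H) (0, 0) = 0"
  proof -
    have c: "continuous_on {-r<..<r} (\<lambda>x. uy (x, 0))" by (rule cont_slice_x[OF cuy opn(2)])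
    have "((\<lambda>t. oint 0 t (\<lambda>x. uy (x, 0))) has_real_derivative uy (0, 0)) (at 0)"
      by (rule oint_deriv[OF c]) (use r in auto)
    then have "((\<lambda>t. oint 0 t (\<lambda>x. uy (x, 0))) has_real_derivative 0) (at 0)" by (simp add: uy0)
    then have "((\<lambda>t. py ?H (t, 0)) has_real_derivative 0) (at 0)"
      by (rule has_field_derivative_transform_within_open[OF _ opn]) (simp add: pyHx)
    then show ?thesis by (simp add: px_def[of "py ?H"] DERIV_imp_deriv)
  qed
  show ?thesis
  proof
    assume "crit_posdef ?H (0, 0)"
    then have "\<forall>a b. (a, b) \<noteq> (0, 0) \<longrightarrow> a\<^sup>2 * px u (0,0) + b\<^sup>2 * varpi > 0"
      by (simp add: crit_posdef_def Hxx Hyy Hxy Hyx)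
    from this[rule_format, of 1 0] this[rule_format, of 0 1] show "px u (0, 0) > 0 \<and> varpi > 0" by simp
  next
    assume a: "px u (0, 0) > 0 \<and> varpi > 0"
    have "a\<^sup>2 * px u (0,0) + b\<^sup>2 * varpi > 0" if "(a, b) \<noteq> (0, 0)" for a b
    proof (cases "a = 0")
      case True
      then have "b \<noteq> 0" using that by simp
      then show ?thesis using a True by simp
    next
      case False
      then have "a\<^sup>2 * px u (0,0) > 0" using a by simp
      moreover have "b\<^sup>2 * varpi \<ge> 0" using a by simp
      ultimately show ?thesis by linarith
    qed
    then show "crit_posdef ?H (0, 0)"
      by (simp add: crit_posdef_def Hxx Hyy Hxy Hyx P1 P2)
  qed
qed


lemma mfun_pos:
  assumes "A * C > B\<^sup>2" shows "mfun A B C q > 0"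
proof -
  have "(cos (fst q - snd q))\<^sup>2 \<le> 1" by (simp add: abs_square_le_1)
  then have "B\<^sup>2 * (cos (fst q - snd q))\<^sup>2 \<le> B\<^sup>2" by (simp add: mult_left_le)
  then show ?thesis using assms by (simp add: mfun_def)
qed

lemma fiberD_Ham:
  assumes m: "mfun A B C q \<noteq> 0"
  shows "fiberD (Ham A B C q) \<alpha> =
    ((C * fst \<alpha> - B * cos (fst q - snd q) * snd \<alpha>) / mfun A B C q,
     (A * snd \<alpha> - B * cos (fst q - snd q) * fst \<alpha>) / mfun A B C q)"
proof -
  obtain a1 a2 where a: "\<alpha> = (a1, a2)" by (cases \<alpha>)
  define c where "c = cos (fst q - snd q)"
  define m where "m = mfun A B C q"
  have h1: "(\<lambda>t. Ham A B C q (\<alpha> + t *\<^sub>R (1, 0))) = (\<lambda>t. (C * (a1 + t)\<^sup>2 - 2 * B * c * (a1 + t) * a2 + A * a2\<^sup>2) / (2 * m))"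
    by (simp add: Ham_def a c_def m_def)
  have h2: "(\<lambda>t. Ham A B C q (\<alpha> + t *\<^sub>R (0, 1))) = (\<lambda>t. (C * a1\<^sup>2 - 2 * B * c * a1 * (a2 + t) + A * (a2 + t)\<^sup>2) / (2 * m))"
    by (simp add: Ham_def a c_def m_def)
  have d1: "((\<lambda>t. (C * (a1 + t)\<^sup>2 - 2 * B * c * (a1 + t) * a2 + A * a2\<^sup>2) / (2 * m)) has_real_derivative (C * a1 - B * c * a2) / m) (at 0)"
    using m unfolding m_def[symmetric]
    by (auto intro!: derivative_eq_intros simp: field_simps)
  have d2: "((\<lambda>t. (C * a1\<^sup>2 - 2 * B * c * a1 * (a2 + t) + A * (a2 + t)\<^sup>2) / (2 * m)) has_real_derivative (A * a2 - B * c * a1) / m) (at 0)"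
    using m unfolding m_def[symmetric]
    by (auto intro!: derivative_eq_intros simp: field_simps)
  show ?thesis
    unfolding fiberD_def h1 h2 DERIV_imp_deriv[OF d1] DERIV_imp_deriv[OF d2]
    by (simp add: a c_def m_def)
qed

definition sig :: "real \<Rightarrow> real \<Rightarrow> real \<Rightarrow> real \<Rightarrow> real \<times> real \<Rightarrow> real \<times> real" where
  "sig A B C \<gamma> q = (A - \<gamma> * (B * cos (fst q - snd q)), B * cos (fst q - snd q) - \<gamma> * C)"

lemma FH_inj:
  assumes AC: "A * C > B\<^sup>2" and A: "A > 0"
    and eq: "fiberD (Ham A B C q) \<alpha> = fiberD (Ham A B C q) \<beta>"
  shows "\<alpha> = \<beta>"
proof -
  have m: "mfun A B C q > 0" by (rule mfun_pos[OF AC])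
  define c where "c = cos (fst q - snd q)"
  define d1 where "d1 = fst \<alpha> - fst \<beta>"
  define d2 where "d2 = snd \<alpha> - snd \<beta>"
  from eq m have e1: "C * fst \<alpha> - B * c * snd \<alpha> = C * fst \<beta> - B * c * snd \<beta>"
    and e2: "A * snd \<alpha> - B * c * fst \<alpha> = A * snd \<beta> - B * c * fst \<beta>"
    by (auto simp: fiberD_Ham c_def)
  have f1: "C * d1 = B * c * d2" using e1 by (simp add: d1_def d2_def algebra_simps)
  have f2: "A * d2 = B * c * d1" using e2 by (simp add: d1_def d2_def algebra_simps)
  have "mfun A B C q * d1 = A * (C * d1) - B * c * (B * c * d1)"
    by (simp add: mfun_def c_def power2_eq_square algebra_simps)
  also have "\<dots> = 0" using f1 f2 by (simp add: algebra_simps)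
  finally have "d1 = 0" using m by simp
  then have "d2 = 0" using f2 A by simp
  with \<open>d1 = 0\<close> show ?thesis by (simp add: d1_def d2_def prod_eq_iff)
qed

lemma FH_sig:
  assumes AC: "A * C > B\<^sup>2"
  shows "fiberD (Ham A B C q) (t *\<^sub>R sig A B C \<gamma> q) = t *\<^sub>R dx_vec \<gamma>"
proof -
  have m: "mfun A B C q > 0" by (rule mfun_pos[OF AC])
  define c where "c = cos (fst q - snd q)"
  have mm: "mfun A B C q = A * C - B * c * (B * c)" by (simp add: mfun_def c_def power2_eq_square algebra_simps)
  show ?thesis using m
    by (simp add: fiberD_Ham sig_def dx_vec_def c_def[symmetric] mm field_simps)
qed

lemma What_eq:
  assumes AC: "A * C > B\<^sup>2" and A: "A > 0"
  shows "What A B C \<gamma> q = range (\<lambda>t. t *\<^sub>R sig A B C \<gamma> q)"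
proof (intro set_eqI iffI)
  fix \<alpha> assume "\<alpha> \<in> What A B C \<gamma> q"
  then obtain t where t: "fiberD (Ham A B C q) \<alpha> = t *\<^sub>R dx_vec \<gamma>" unfolding What_def by blast
  have "fiberD (Ham A B C q) \<alpha> = fiberD (Ham A B C q) (t *\<^sub>R sig A B C \<gamma> q)"
    unfolding t FH_sig[OF AC] ..
  then have "\<alpha> = t *\<^sub>R sig A B C \<gamma> q" by (rule FH_inj[OF AC A, of q])
  then show "\<alpha> \<in> range (\<lambda>t. t *\<^sub>R sig A B C \<gamma> q)" by (rule range_eqI)
next
  fix \<alpha> assume "\<alpha> \<in> range (\<lambda>t. t *\<^sub>R sig A B C \<gamma> q)"
  then obtain t where "\<alpha> = t *\<^sub>R sig A B C \<gamma> q" by blast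
  then show "\<alpha> \<in> What A B C \<gamma> q"
    unfolding What_def using FH_sig[OF AC, of q t \<gamma>] by blast
qed

lemma sigma_eq:
  assumes AC: "A * C > B\<^sup>2" and A: "A > 0"
  shows "sigma A B C \<gamma> q = sig A B C \<gamma> q"
proof -
  have s1: "fiberD (Ham A B C q) (sig A B C \<gamma> q) = dx_vec \<gamma>"
    using FH_sig[OF AC, of q 1 \<gamma>] by (simp only: scaleR_one)
  show ?thesis
    unfolding sigma_def
  proof (rule the_equality)
    show "fiberD (Ham A B C q) (sig A B C \<gamma> q) = dx_vec \<gamma>" by (rule s1)
    fix \<alpha> assume a: "fiberD (Ham A B C q) \<alpha> = dx_vec \<gamma>"
    show "\<alpha> = sig A B C \<gamma> q"
      by (rule FH_inj[OF AC A, of q]) (simp only: a s1)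
  qed
qed

lemma complement_line:
  fixes s :: "real \<times> real"
  assumes s: "fst s \<noteq> 0"
  shows "is_complement (range (\<lambda>t. t *\<^sub>R s)) Wsp"
    and "proj (range (\<lambda>t. t *\<^sub>R s)) Wsp \<alpha> = (fst \<alpha> / fst s) *\<^sub>R s"
proof -
  have sp1: "range (\<lambda>t. t *\<^sub>R s) = span {s}" by (simp add: span_singleton)
  have sp2: "Wsp = span {(0, 1)}" by (simp add: span_singleton Wsp_def)
  show "is_complement (range (\<lambda>t. t *\<^sub>R s)) Wsp"
    unfolding is_complement_def
  proof (intro conjI allI)
    show "subspace (range (\<lambda>t. t *\<^sub>R s))" unfolding sp1 by (rule subspace_span)
    show "subspace Wsp" unfolding sp2 by (rule subspace_span)
    show "range (\<lambda>t. t *\<^sub>R s) \<inter> Wsp = {0}"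
      using s by (auto simp: Wsp_def prod_eq_iff)
    fix \<alpha> :: "real \<times> real"
    show "\<exists>w1\<in>range (\<lambda>t. t *\<^sub>R s). \<exists>w2\<in>Wsp. \<alpha> = w1 + w2"
    proof (intro bexI)
      show "\<alpha> = (fst \<alpha> / fst s) *\<^sub>R s + (snd \<alpha> - fst \<alpha> / fst s * snd s) *\<^sub>R (0, 1)"
        using s by (simp add: prod_eq_iff)
    qed (auto simp: Wsp_def)
  qed
  show "proj (range (\<lambda>t. t *\<^sub>R s)) Wsp \<alpha> = (fst \<alpha> / fst s) *\<^sub>R s"
    unfolding proj_def
  proof (rule the_equality)
    show "(fst \<alpha> / fst s) *\<^sub>R s \<in> range (\<lambda>t. t *\<^sub>R s) \<and> \<alpha> - (fst \<alpha> / fst s) *\<^sub>R s \<in> Wsp"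
    proof
      show "(fst \<alpha> / fst s) *\<^sub>R s \<in> range (\<lambda>t. t *\<^sub>R s)" by auto
      have "\<alpha> - (fst \<alpha> / fst s) *\<^sub>R s = (snd \<alpha> - fst \<alpha> / fst s * snd s) *\<^sub>R (0, 1)"
        using s by (simp add: prod_eq_iff)
      then show "\<alpha> - (fst \<alpha> / fst s) *\<^sub>R s \<in> Wsp" unfolding Wsp_def by (rule range_eqI)
    qed
    fix w assume "w \<in> range (\<lambda>t. t *\<^sub>R s) \<and> \<alpha> - w \<in> Wsp"
    then obtain t u where "w = t *\<^sub>R s" "\<alpha> - w = u *\<^sub>R (0, 1)" by (auto simp: Wsp_def)
    then have "fst \<alpha> = t * fst s" by (auto simp: prod_eq_iff)
    then show "w = (fst \<alpha> / fst s) *\<^sub>R s" using s \<open>w = t *\<^sub>R s\<close> by simp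
  qed
qed


lemma ufun_eq:
  "ufun A B D1 D2 \<gamma> K z = - (D1 * sin (fst z)) / (A - \<gamma> * bfun B \<gamma> z) * K z"
proof -
  obtain x y where z: "z = (x, y)" by (cases z)
  have d1: "((\<lambda>t. D1 * cos t + D2 * cos (y - \<gamma> * t)) has_real_derivative
       - D1 * sin x + \<gamma> * D2 * sin (y - \<gamma> * x)) (at x)"
    by (auto intro!: derivative_eq_intros)
  have d2: "((\<lambda>t. D1 * cos x + D2 * cos (t - \<gamma> * x)) has_real_derivative
       - D2 * sin (y - \<gamma> * x)) (at y)"
    by (auto intro!: derivative_eq_intros)
  have p1: "px (\<lambda>w. hfun D1 D2 (psiphi_of \<gamma> w)) z = - D1 * sin x + \<gamma> * D2 * sin (y - \<gamma> * x)"
    using DERIV_imp_deriv[OF d1] by (simp add: px_def hfun_def psiphi_of_def z)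
  have p2: "py (\<lambda>w. hfun D1 D2 (psiphi_of \<gamma> w)) z = - D2 * sin (y - \<gamma> * x)"
    using DERIV_imp_deriv[OF d2] by (simp add: py_def hfun_def psiphi_of_def z)
  define d where "d = A - \<gamma> * bfun B \<gamma> z"
  have "(- D1 * sin x + \<gamma> * D2 * sin (y - \<gamma> * x)) * (1 / d) + (- D2 * sin (y - \<gamma> * x)) * (\<gamma> / d)
        = - (D1 * sin x) / d"
    by (simp add: add_divide_distrib[symmetric] algebra_simps)
  moreover have "ufun A B D1 D2 \<gamma> K z = ((- D1 * sin x + \<gamma> * D2 * sin (y - \<gamma> * x)) * (1 / d) + (- D2 * sin (y - \<gamma> * x)) * (\<gamma> / d)) * K z"
    unfolding ufun_def p1 p2 Phat1_def Phat2_def d_def ..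
  ultimately show ?thesis by (simp add: d_def z)
qed

lemma slice_y:
  assumes "(K has_derivative (\<lambda>v. fst v * a + snd v * b)) (at (x, y))"
  shows "((\<lambda>s. K (x, s)) has_real_derivative b) (at y)"
proof -
  have "((\<lambda>s. (x, s)) has_derivative (\<lambda>v. (0, v))) (at y)"
    by (auto intro!: derivative_eq_intros)
  from has_derivative_compose[OF this assms]
  show ?thesis unfolding has_field_derivative_def
    by (rule has_derivative_eq_rhs) (auto simp: o_def mult.commute)
qed

lemma slice_x:
  assumes "(K has_derivative (\<lambda>v. fst v * a + snd v * b)) (at (x, y))"
  shows "((\<lambda>s. K (s, y)) has_real_derivative a) (at x)"
proof -
  have "((\<lambda>s. (s, y)) has_derivative (\<lambda>v. (v, 0))) (at x)"
    by (auto intro!: derivative_eq_intros)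
  from has_derivative_compose[OF this assms]
  show ?thesis unfolding has_field_derivative_def
    by (rule has_derivative_eq_rhs) (auto simp: o_def mult.commute)
qed

lemma smooth2_D:
  assumes "smooth2 S K"
  obtains g1 g2 where "continuous_on S K"
    "\<And>z. z \<in> S \<Longrightarrow> (K has_derivative (\<lambda>v. fst v * g1 z + snd v * g2 z)) (at z)"
    "smooth2 S g1" "smooth2 S g2"
  using assms by (cases rule: smooth2.cases) auto

lemma smooth2_cont: "smooth2 S K \<Longrightarrow> continuous_on S K"
  by (erule smooth2_D)

definition denf :: "real \<Rightarrow> real \<Rightarrow> real \<Rightarrow> real \<times> real \<Rightarrow> real" where
  "denf A B \<gamma> z = A - \<gamma> * (B * cos ((1 + \<gamma>) * fst z - snd z))"

definition uyf :: "real \<Rightarrow> real \<Rightarrow> real \<Rightarrow> real \<Rightarrow> (real \<times> real \<Rightarrow> real) \<Rightarrow> (real \<times> real \<Rightarrow> real) \<Rightarrow> real \<times> real \<Rightarrow> real" where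
  "uyf A B D1 \<gamma> K g2 z = - (D1 * sin (fst z)) * (g2 z * inverse (denf A B \<gamma> z)
      + K z * (- ((- (\<gamma> * (B * sin ((1 + \<gamma>) * fst z - snd z)))) * inverse (denf A B \<gamma> z ^ Suc (Suc 0)))))"

lemma ufun_alt: "ufun A B D1 D2 \<gamma> K z = - (D1 * sin (fst z)) * (K z * inverse (denf A B \<gamma> z))"
  by (simp add: ufun_eq denf_def bfun_def divide_inverse)

lemma uy_deriv:
  fixes K g2 :: "real \<times> real \<Rightarrow> real"
  assumes dK: "((\<lambda>s. K (x, s)) has_real_derivative g2 (x, y)) (at y)"
    and den: "denf A B \<gamma> (x, y) \<noteq> 0"
  shows "((\<lambda>s. ufun A B D1 D2 \<gamma> K (x, s)) has_real_derivative uyf A B D1 \<gamma> K g2 (x, y)) (at y)"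
proof -
  have dden: "((\<lambda>s. denf A B \<gamma> (x, s)) has_real_derivative - (\<gamma> * (B * sin ((1 + \<gamma>) * x - y)))) (at y)"
    unfolding denf_def fst_conv snd_conv by (auto intro!: derivative_eq_intros)
  have dinv: "((\<lambda>s. inverse (denf A B \<gamma> (x, s))) has_real_derivative
     - ((- (\<gamma> * (B * sin ((1 + \<gamma>) * x - y)))) * inverse (denf A B \<gamma> (x, y) ^ Suc (Suc 0)))) (at y)"
    by (rule DERIV_inverse_fun[OF dden den])
  have "((\<lambda>s. - (D1 * sin x) * (K (x, s) * inverse (denf A B \<gamma> (x, s)))) has_real_derivative
     - (D1 * sin x) * (g2 (x, y) * inverse (denf A B \<gamma> (x, y)) + K (x, y) * (- ((- (\<gamma> * (B * sin ((1 + \<gamma>) * x - y)))) * inverse (denf A B \<gamma> (x, y) ^ Suc (Suc 0)))))) (at y)"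
    by (rule DERIV_cong[OF DERIV_cmult[OF DERIV_mult[OF dK dinv]]]) (simp add: algebra_simps)
  then show ?thesis by (simp only: ufun_alt uyf_def fst_conv snd_conv)
qed


theorem mainTheorem10:
  fixes A B C D1 D2 \<gamma> :: real
  assumes "A > 0" "B > 0" "C > 0" "D1 > 0" "D2 > 0" "A * C > B\<^sup>2"
    and "\<gamma> \<noteq> -1" "\<gamma> \<noteq> A / B"
  shows "\<exists>U. open U \<and> (0, 0) \<in> U \<and>
    (\<forall>q\<in>U.
        is_complement (What A B C \<gamma> q) Wsp
      \<and> proj (What A B C \<gamma> q) Wsp dx_cov
          = (1 / (A - \<gamma> * bfun B \<gamma> (xy_of \<gamma> q))) *\<^sub>R sigma A B C \<gamma> q
      \<and> proj (What A B C \<gamma> q) Wsp (dy_cov \<gamma>)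
          = (\<gamma> / (A - \<gamma> * bfun B \<gamma> (xy_of \<gamma> q))) *\<^sub>R sigma A B C \<gamma> q) \<and>
    (\<forall>K. smooth2 (xy_of \<gamma> ` U) K \<and> (\<forall>z\<in>xy_of \<gamma> ` U. K z > 0) \<longrightarrow>
        (\<forall>z\<in>xy_of \<gamma> ` U. ufun A B D1 D2 \<gamma> K z
            = - (D1 * sin (fst z)) / (A - \<gamma> * bfun B \<gamma> z) * K z)
      \<and> py (ufun A B D1 D2 \<gamma> K) (0, 0) = 0
      \<and> px (ufun A B D1 D2 \<gamma> K) (0, 0) = - D1 * K (0, 0) / (A - \<gamma> * B)
      \<and> (px (ufun A B D1 D2 \<gamma> K) (0, 0) > 0 \<longleftrightarrow> \<gamma> > A / B)
      \<and> (kinetic_eq A B C \<gamma> U K \<longrightarrow>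
           (\<forall>varpi. crit_posdef (hhat (ufun A B D1 D2 \<gamma> K) varpi) (0, 0)
                   \<longleftrightarrow> \<gamma> > A / B \<and> varpi > 0)))"
proof -
  note Apos = assms(1) and Bpos = assms(2) and D1pos = assms(4) and AC = assms(6)
  have bf: "A - \<gamma> * bfun B \<gamma> z = denf A B \<gamma> z" for z by (simp add: bfun_def denf_def)
  have cden: "continuous_on UNIV (denf A B \<gamma>)" unfolding denf_def by (intro continuous_intros)
  have AgB: "A - \<gamma> * B \<noteq> 0"
  proof
    assume "A - \<gamma> * B = 0"
    then have "\<gamma> = A / B" using Bpos by (simp add: field_simps)
    then show False using assms(8) by simp
  qed
  have d0: "denf A B \<gamma> (0, 0) = A - \<gamma> * B" by (simp add: denf_def)
  obtain e where e: "e > 0" "\<And>y. dist (0, 0) y < e \<Longrightarrow> denf A B \<gamma> y \<noteq> 0"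
    using continuous_at_avoid[of "(0::real, 0::real)" "denf A B \<gamma>" 0] cden AgB d0
    by (auto simp: continuous_on_eq_continuous_at)
  define r where "r = e / 2"
  have r: "r > 0" using e by (simp add: r_def)
  define S where "S = {-r<..<r} \<times> {-r<..<r}"
  have denS: "denf A B \<gamma> z \<noteq> 0" if "z \<in> S" for z
  proof -
    obtain x y where z: "z = (x, y)" by (cases z)
    have "dist (0, 0) z = sqrt (x\<^sup>2 + y\<^sup>2)" by (simp add: z dist_norm norm_Pair)
    also have "\<dots> \<le> \<bar>x\<bar> + \<bar>y\<bar>" by (rule sqrt_sum_squares_le_sum_abs)
    also have "\<dots> < e" using that by (auto simp: S_def z r_def)
    finally show ?thesis by (rule e(2))
  qed
  have S0: "(0, 0) \<in> S" using r by (simp add: S_def)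
  have openS: "open S" by (simp add: S_def open_Times)
  define U where "U = xy_of \<gamma> -` S"
  have openU: "open U" unfolding U_def
    by (rule continuous_open_vimage[OF openS], unfold xy_of_def[abs_def], intro continuous_intros)
  have U0: "(0, 0) \<in> U" using S0 by (simp add: U_def xy_of_def)
  have surj: "surj (xy_of \<gamma>)"
    by (rule surjI[where f="psiphi_of \<gamma>"]) (simp add: xy_of_def psiphi_of_def)
  have imgU: "xy_of \<gamma> ` U = S" unfolding U_def by (rule surj_image_vimage_eq[OF surj])
  have part1: "is_complement (What A B C \<gamma> q) Wsp
      \<and> proj (What A B C \<gamma> q) Wsp dx_cov
          = (1 / (A - \<gamma> * bfun B \<gamma> (xy_of \<gamma> q))) *\<^sub>R sigma A B C \<gamma> q
      \<and> proj (What A B C \<gamma> q) Wsp (dy_cov \<gamma>)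
          = (\<gamma> / (A - \<gamma> * bfun B \<gamma> (xy_of \<gamma> q))) *\<^sub>R sigma A B C \<gamma> q" if q: "q \<in> U" for q
  proof -
    have ang: "(1 + \<gamma>) * fst q - (snd q + \<gamma> * fst q) = fst q - snd q" by algebra
    have fs: "fst (sig A B C \<gamma> q) = denf A B \<gamma> (xy_of \<gamma> q)"
      by (simp add: sig_def denf_def xy_of_def ang)
    have nz: "fst (sig A B C \<gamma> q) \<noteq> 0" unfolding fs using q denS by (simp add: U_def)
    show ?thesis
      unfolding What_eq[OF AC Apos] sigma_eq[OF AC Apos] bf fs[symmetric]
      using complement_line[OF nz] by (simp add: dx_cov_def dy_cov_def)
  qed
  have part2: "(\<forall>z\<in>S. ufun A B D1 D2 \<gamma> K z
            = - (D1 * sin (fst z)) / (A - \<gamma> * bfun B \<gamma> z) * K z)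
      \<and> py (ufun A B D1 D2 \<gamma> K) (0, 0) = 0
      \<and> px (ufun A B D1 D2 \<gamma> K) (0, 0) = - D1 * K (0, 0) / (A - \<gamma> * B)
      \<and> (px (ufun A B D1 D2 \<gamma> K) (0, 0) > 0 \<longleftrightarrow> \<gamma> > A / B)
      \<and> (\<forall>varpi. crit_posdef (hhat (ufun A B D1 D2 \<gamma> K) varpi) (0, 0)
                   \<longleftrightarrow> \<gamma> > A / B \<and> varpi > 0)"
    if sK: "smooth2 S K" and Kpos: "\<forall>z\<in>S. K z > 0" for K
  proof -
    obtain g1 g2 where cK: "continuous_on S K"
      and dK: "\<And>z. z \<in> S \<Longrightarrow> (K has_derivative (\<lambda>v. fst v * g1 z + snd v * g2 z)) (at z)"
      and sg2: "smooth2 S g2"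
      using smooth2_D[OF sK] by metis
    have cg2: "continuous_on S g2" by (rule smooth2_cont[OF sg2])
    let ?u = "ufun A B D1 D2 \<gamma> K"
    have u0: "?u (0, y) = 0" for y by (simp add: ufun_eq)
    have Py: "py ?u (0, 0) = 0" by (simp add: py_def u0)
    have Px: "px ?u (0, 0) = - D1 * K (0, 0) / (A - \<gamma> * B)"
    proof -
      have dsin: "((\<lambda>t. - (D1 * sin t)) has_real_derivative - (D1 * cos 0)) (at 0)"
        by (auto intro!: derivative_eq_intros)
      have dKx: "((\<lambda>t. K (t, 0)) has_real_derivative g1 (0, 0)) (at 0)"
        by (rule slice_x[OF dK[OF S0]])
      have dden: "((\<lambda>t. denf A B \<gamma> (t, 0)) has_real_derivative 0) (at 0)"
        unfolding denf_def by (auto intro!: derivative_eq_intros)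
      have dinv: "((\<lambda>t. inverse (denf A B \<gamma> (t, 0))) has_real_derivative - (0 * inverse (denf A B \<gamma> (0, 0) ^ Suc (Suc 0)))) (at 0)"
        by (rule DERIV_inverse_fun[OF dden]) (use AgB in \<open>simp add: d0\<close>)
      have "((\<lambda>t. - (D1 * sin t) * (K (t, 0) * inverse (denf A B \<gamma> (t, 0)))) has_real_derivative
          - (D1 * cos 0) * (K (0, 0) * inverse (denf A B \<gamma> (0, 0)))) (at 0)"
        by (rule DERIV_cong[OF DERIV_mult[OF dsin DERIV_mult[OF dKx dinv]]]) simp
      then have "((\<lambda>t. ?u (t, 0)) has_real_derivative - D1 * K (0, 0) / (A - \<gamma> * B)) (at 0)"
        by (simp add: ufun_alt d0 divide_inverse mult.assoc)
      then show ?thesis by (simp add: px_def DERIV_imp_deriv)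
    qed
    have K0: "K (0, 0) > 0" using Kpos S0 by blast
    have Ppos: "px ?u (0, 0) > 0 \<longleftrightarrow> \<gamma> > A / B"
    proof -
      have "px ?u (0, 0) > 0 \<longleftrightarrow> A - \<gamma> * B < 0"
      proof -
        have N: "\<not> 0 < - D1 * K (0, 0)" "- D1 * K (0, 0) < 0"
          using mult_pos_pos[OF D1pos K0] by simp_all
        show ?thesis unfolding Px using N by (simp add: zero_less_divide_iff divide_less_0_iff)
      qed
      also have "\<dots> \<longleftrightarrow> \<gamma> > A / B" using Bpos by (simp add: pos_divide_less_eq algebra_simps)
      finally show ?thesis .
    qed
    have ualt: "?u = (\<lambda>z. - (D1 * sin (fst z)) * (K z * inverse (denf A B \<gamma> z)))"
      by (rule ext) (rule ufun_alt)
    have cd: "continuous_on S (denf A B \<gamma>)" by (rule continuous_on_subset[OF cden]) simp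
    have cu: "continuous_on S ?u" unfolding ualt
      by (intro continuous_intros cK cd) (use denS in auto)
    have cuy: "continuous_on S (uyf A B D1 \<gamma> K g2)" unfolding uyf_def
      by (intro continuous_intros cK cd cg2) (use denS in auto)
    have dy: "((\<lambda>s. ?u (fst z, s)) has_real_derivative uyf A B D1 \<gamma> K g2 z) (at (snd z))"
      if z: "z \<in> S" for z
    proof -
      obtain x y where zz: "z = (x, y)" by (cases z)
      show ?thesis unfolding zz fst_conv snd_conv
        by (rule uy_deriv) (use slice_y[OF dK[OF z[unfolded zz]]] denS[OF z[unfolded zz]] in auto)
    qed
    have uy0: "uyf A B D1 \<gamma> K g2 (0, 0) = 0" by (simp add: uyf_def)
    have H: "crit_posdef (hhat ?u varpi) (0, 0) \<longleftrightarrow> px ?u (0, 0) > 0 \<and> varpi > 0" for varpi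
      by (rule hhat_crit[OF r cu[unfolded S_def] cuy[unfolded S_def] dy[unfolded S_def] u0 uy0])
    show ?thesis
    proof (intro conjI ballI allI)
      fix z show "?u z = - (D1 * sin (fst z)) / (A - \<gamma> * bfun B \<gamma> z) * K z" by (rule ufun_eq)
    next
      fix varpi show "crit_posdef (hhat ?u varpi) (0, 0) \<longleftrightarrow> \<gamma> > A / B \<and> varpi > 0"
        using H Ppos by simp
    qed (rule Py, rule Px, rule Ppos)
  qed
  show ?thesis
  proof (rule exI[of _ U], intro conjI)
    show "open U" by (rule openU)
    show "(0, 0) \<in> U" by (rule U0)
    show "\<forall>q\<in>U. is_complement (What A B C \<gamma> q) Wsp
      \<and> proj (What A B C \<gamma> q) Wsp dx_cov
          = (1 / (A - \<gamma> * bfun B \<gamma> (xy_of \<gamma> q))) *\<^sub>R sigma A B C \<gamma> q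
      \<and> proj (What A B C \<gamma> q) Wsp (dy_cov \<gamma>)
          = (\<gamma> / (A - \<gamma> * bfun B \<gamma> (xy_of \<gamma> q))) *\<^sub>R sigma A B C \<gamma> q"
      using part1 by blast
  next
    show "\<forall>K. smooth2 (xy_of \<gamma> ` U) K \<and> (\<forall>z\<in>xy_of \<gamma> ` U. K z > 0) \<longrightarrow>
        (\<forall>z\<in>xy_of \<gamma> ` U. ufun A B D1 D2 \<gamma> K z
            = - (D1 * sin (fst z)) / (A - \<gamma> * bfun B \<gamma> z) * K z)
      \<and> py (ufun A B D1 D2 \<gamma> K) (0, 0) = 0
      \<and> px (ufun A B D1 D2 \<gamma> K) (0, 0) = - D1 * K (0, 0) / (A - \<gamma> * B)
      \<and> (px (ufun A B D1 D2 \<gamma> K) (0, 0) > 0 \<longleftrightarrow> \<gamma> > A / B)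
      \<and> (kinetic_eq A B C \<gamma> U K \<longrightarrow>
           (\<forall>varpi. crit_posdef (hhat (ufun A B D1 D2 \<gamma> K) varpi) (0, 0)
                   \<longleftrightarrow> \<gamma> > A / B \<and> varpi > 0))"
    proof (intro allI impI)
      fix K assume a: "smooth2 (xy_of \<gamma> ` U) K \<and> (\<forall>z\<in>xy_of \<gamma> ` U. K z > 0)"
      then have P: "smooth2 S K" "\<forall>z\<in>S. K z > 0" unfolding imgU by auto
      note p2 = part2[OF P]
      show "(\<forall>z\<in>xy_of \<gamma> ` U. ufun A B D1 D2 \<gamma> K z
            = - (D1 * sin (fst z)) / (A - \<gamma> * bfun B \<gamma> z) * K z)
      \<and> py (ufun A B D1 D2 \<gamma> K) (0, 0) = 0
      \<and> px (ufun A B D1 D2 \<gamma> K) (0, 0) = - D1 * K (0, 0) / (A - \<gamma> * B)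
      \<and> (px (ufun A B D1 D2 \<gamma> K) (0, 0) > 0 \<longleftrightarrow> \<gamma> > A / B)
      \<and> (kinetic_eq A B C \<gamma> U K \<longrightarrow>
           (\<forall>varpi. crit_posdef (hhat (ufun A B D1 D2 \<gamma> K) varpi) (0, 0)
                   \<longleftrightarrow> \<gamma> > A / B \<and> varpi > 0))"
        using p2 unfolding imgU by blast
    qed
  qed
qed

end
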